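(* Let $n,p$ be positive integers and $x_1,\dots,x_n\in\mathbb R^p$. Define $$C_{p,n}(x_1;x_2,\dots,x_n)=\begin{cases}\sup_{a\in(0,\infty)} x_1^T\,(x_1x_1^T+aI_p)^{-2}x_1, & n=1,\\[2pt] \sup_{a\in(0,\infty)^n} x_1^T\Big(x_1x_1^T+\sum_{i=2}^n a_ix_ix_i^T+a_1I_p\Big)^{-2}x_1, & n\ge2.\end{cases}$$ Then $C_{p,n}(x_1;x_2,\dots,x_n)<\infty$.
   Context: $I_p$ is the $p\times p$ identity matrix and $a=(a_1,\dots,a_n)$. *)

theory Defs
  imports "HOL-Analysis.Analysis"
begin

definition outer :: "real^'p \<Rightarrow> real^'p^'p" where
  "outer x = (\<chi> i j. x $ i * x $ j)"

definition Cmat :: "nat \<Rightarrow> (nat \<Rightarrow> real^'p) \<Rightarrow> (nat \<Rightarrow> real) \<Rightarrow> real^'p^'p" where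
  "Cmat n x a = outer (x 1) + (\<Sum>i\<in>{2..n}. a i *\<^sub>R outer (x i)) + a 1 *\<^sub>R mat 1"

definition C :: "nat \<Rightarrow> (nat \<Rightarrow> real^'p) \<Rightarrow> ereal" where
  "C n x = (SUP a \<in> {a. \<forall>i\<in>{1..n}. a i > 0}.
      ereal (x 1 \<bullet> ((matrix_inv (Cmat n x a) ** matrix_inv (Cmat n x a)) *v x 1)))"

end

theory Submission
  imports Defs
begin

definition Pq :: "real \<Rightarrow> ('i \<Rightarrow> real) \<Rightarrow> ('i \<Rightarrow> 'v::euclidean_space) \<Rightarrow> ('i \<Rightarrow> real) \<Rightarrow> 'i set \<Rightarrow> 'v \<Rightarrow> real" where
  "Pq a w r c I y = a * (y \<bullet> y) + (\<Sum>i\<in>I. w i * (r i \<bullet> y - c i)^2)"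
definition Gq :: "real \<Rightarrow> ('i \<Rightarrow> real) \<Rightarrow> ('i \<Rightarrow> 'v::euclidean_space) \<Rightarrow> ('i \<Rightarrow> real) \<Rightarrow> 'i set \<Rightarrow> 'v \<Rightarrow> 'v \<Rightarrow> real" where
  "Gq a w r c I y d = a * (y \<bullet> d) + (\<Sum>i\<in>I. w i * (r i \<bullet> y - c i) * (r i \<bullet> d))"
definition Hq :: "real \<Rightarrow> ('i \<Rightarrow> real) \<Rightarrow> ('i \<Rightarrow> 'v::euclidean_space) \<Rightarrow> 'i set \<Rightarrow> 'v \<Rightarrow> real" where
  "Hq a w r I d = a * (d \<bullet> d) + (\<Sum>i\<in>I. w i * (r i \<bullet> d)^2)"
definition ismin :: "('v \<Rightarrow> real) \<Rightarrow> 'v set \<Rightarrow> 'v \<Rightarrow> bool" where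
  "ismin F S y \<longleftrightarrow> y \<in> S \<and> (\<forall>u\<in>S. F y \<le> F u)"

lemma Pq_expand: "Pq a w r c I (y + t *\<^sub>R d) = Pq a w r c I y + 2*t*Gq a w r c I y d + t^2 * Hq a w r I d"
proof -
  have "\<And>i. w i * (r i \<bullet> (y + t *\<^sub>R d) - c i)^2 = w i * (r i \<bullet> y - c i)^2 + 2*t*(w i * (r i \<bullet> y - c i) * (r i \<bullet> d)) + t^2 * (w i * (r i \<bullet> d)^2)"
    by (simp add: inner_add_right power2_eq_square algebra_simps)
  then have "(\<Sum>i\<in>I. w i * (r i \<bullet> (y + t *\<^sub>R d) - c i)^2) = (\<Sum>i\<in>I. w i * (r i \<bullet> y - c i)^2) + 2*t*(\<Sum>i\<in>I. w i * (r i \<bullet> y - c i) * (r i \<bullet> d)) + t^2 * (\<Sum>i\<in>I. w i * (r i \<bullet> d)^2)"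
    by (simp add: sum.distrib sum_distrib_left)
  moreover have "a * ((y + t *\<^sub>R d) \<bullet> (y + t *\<^sub>R d)) = a*(y\<bullet>y) + 2*t*(a*(y\<bullet>d)) + t^2*(a*(d\<bullet>d))"
    by (simp add: inner_add_left inner_add_right inner_commute power2_eq_square algebra_simps)
  ultimately show ?thesis unfolding Pq_def Gq_def Hq_def by (simp add: algebra_simps)
qed

lemma Hq_ge: assumes "a \<ge> 0" "\<forall>i\<in>I. w i \<ge> 0" shows "Hq a w r I d \<ge> a * (d \<bullet> d)"
  unfolding Hq_def using assms by (auto intro!: sum_nonneg)

lemma Hq_nonneg: assumes "a \<ge> 0" "\<forall>i\<in>I. w i \<ge> 0" shows "Hq a w r I d \<ge> 0"
  using Hq_ge[OF assms] assms(1) by (meson mult_nonneg_nonneg inner_ge_zero order_trans)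

lemma Gq_comb: "Gq a w r c I ((1-\<theta>) *\<^sub>R y0 + \<theta> *\<^sub>R y1) d = (1-\<theta>) * Gq a w r c I y0 d + \<theta> * Gq a w r c I y1 d"
proof -
  have "\<And>i. w i * (r i \<bullet> ((1-\<theta>) *\<^sub>R y0 + \<theta> *\<^sub>R y1) - c i) * (r i \<bullet> d) = (1-\<theta>) * (w i * (r i \<bullet> y0 - c i) * (r i \<bullet> d)) + \<theta> * (w i * (r i \<bullet> y1 - c i) * (r i \<bullet> d))"
    by (simp add: inner_add_right algebra_simps)
  then have "(\<Sum>i\<in>I. w i * (r i \<bullet> ((1-\<theta>) *\<^sub>R y0 + \<theta> *\<^sub>R y1) - c i) * (r i \<bullet> d)) = (1-\<theta>) * (\<Sum>i\<in>I. w i * (r i \<bullet> y0 - c i) * (r i \<bullet> d)) + \<theta> * (\<Sum>i\<in>I. w i * (r i \<bullet> y1 - c i) * (r i \<bullet> d))"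
    by (simp add: sum.distrib sum_distrib_left)
  moreover have "a * (((1-\<theta>) *\<^sub>R y0 + \<theta> *\<^sub>R y1) \<bullet> d) = (1-\<theta>) * (a * (y0 \<bullet> d)) + \<theta> * (a*(y1 \<bullet> d))"
    by (simp add: inner_add_left algebra_simps)
  ultimately show ?thesis unfolding Gq_def by (simp add: algebra_simps)
qed

lemma quad_zero: fixes g h :: real assumes "h \<ge> 0" "\<forall>t. 2*t*g + t^2*h \<ge> 0" shows "g = 0"
proof (rule ccontr)
  assume "g \<noteq> 0"
  define t where "t = -g/(h+1)"
  have gt: "g = -t*(h+1)" using assms(1) by (simp add: t_def)
  then have "t \<noteq> 0" using \<open>g \<noteq> 0\<close> by auto
  have "2*t*g + t^2*h = t^2 * (-h-2)" by (simp add: gt power2_eq_square algebra_simps)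
  also have "\<dots> < 0" using \<open>t \<noteq> 0\<close> assms(1)
    by (intro mult_pos_neg) auto
  finally show False using assms(2) by (metis not_le)
qed

lemma opt_char:
  assumes "affine S" "y \<in> S" "a \<ge> 0" "\<forall>i\<in>I. w i \<ge> 0"
  shows "ismin (Pq a w r c I) S y \<longleftrightarrow> (\<forall>u\<in>S. Gq a w r c I y (u - y) = 0)"
proof
  assume m: "ismin (Pq a w r c I) S y"
  show "\<forall>u\<in>S. Gq a w r c I y (u - y) = 0"
  proof
    fix u assume "u \<in> S"
    have "\<forall>t. 2*t*Gq a w r c I y (u-y) + t^2 * Hq a w r I (u-y) \<ge> 0"
    proof
      fix t
      have "y + t *\<^sub>R (u - y) \<in> S" using mem_affine_3_minus[OF assms(1) assms(2) \<open>u\<in>S\<close> assms(2)] by simp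
      then have "Pq a w r c I y \<le> Pq a w r c I (y + t *\<^sub>R (u - y))" using m unfolding ismin_def by blast
      then show "2*t*Gq a w r c I y (u-y) + t^2 * Hq a w r I (u-y) \<ge> 0" by (simp add: Pq_expand)
    qed
    then show "Gq a w r c I y (u - y) = 0" using quad_zero Hq_nonneg[OF assms(3,4)] by blast
  qed
next
  assume g: "\<forall>u\<in>S. Gq a w r c I y (u - y) = 0"
  show "ismin (Pq a w r c I) S y" unfolding ismin_def
  proof (intro conjI ballI)
    fix u assume "u \<in> S"
    have "Pq a w r c I u = Pq a w r c I y + Hq a w r I (u - y)"
      using Pq_expand[of a w r c I y 1 "u-y"] g \<open>u\<in>S\<close> by simp
    then show "Pq a w r c I y \<le> Pq a w r c I u" using Hq_nonneg[OF assms(3,4)] by simp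
  qed (fact assms)
qed

lemma opt_unique:
  assumes "affine S" "a > 0" "\<forall>i\<in>I. w i \<ge> 0"
    "ismin (Pq a w r c I) S y" "ismin (Pq a w r c I) S y'"
  shows "y = y'"
proof -
  have yS: "y \<in> S" "y' \<in> S" using assms(4,5) by (auto simp: ismin_def)
  have g: "Gq a w r c I y (y' - y) = 0" using opt_char[OF assms(1) yS(1) _ assms(3)] assms(2,4) yS by auto
  have "Pq a w r c I y' = Pq a w r c I y + Hq a w r I (y' - y)"
    using Pq_expand[of a w r c I y 1 "y'-y"] g by simp
  then have "Hq a w r I (y' - y) \<le> 0" using assms(5) yS unfolding ismin_def by force
  moreover have "Hq a w r I (y'-y) \<ge> a * ((y'-y) \<bullet> (y'-y))" by (rule Hq_ge) (use assms in auto)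
  ultimately have "a * ((y'-y) \<bullet> (y'-y)) \<le> 0" by linarith
  then have "(y'-y) \<bullet> (y'-y) \<le> 0" using assms(2) by (simp add: mult_le_0_iff)
  then have "y' - y = 0" by (meson inner_eq_zero_iff inner_ge_zero order_antisym)
  then show ?thesis by simp
qed

lemma Pq_ge: assumes "a \<ge> 0" "\<forall>i\<in>I. w i \<ge> 0" shows "Pq a w r c I y \<ge> a * (y \<bullet> y)"
  unfolding Pq_def using assms by (auto intro!: sum_nonneg)

lemma Pq_cont: "continuous_on UNIV (Pq a w r c I)"
  unfolding Pq_def by (intro continuous_intros)

lemma opt_exists:
  fixes r :: "'i \<Rightarrow> 'v::euclidean_space"
  assumes "closed S" "S \<noteq> {}" "a > 0" "\<forall>i\<in>I. w i \<ge> 0"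
  shows "\<exists>y. ismin (Pq a w r c I) S y"
proof -
  let ?F = "Pq a w r c I"
  obtain u0 where u0: "u0 \<in> S" using assms(2) by blast
  have F0: "?F u0 \<ge> 0" using Pq_ge[where y=u0] assms(3,4) by (meson inner_ge_zero less_imp_le mult_nonneg_nonneg order_trans)
  define R where "R = norm u0 + sqrt (?F u0 / a)"
  have Rge: "norm u0 \<le> R" using F0 assms(3) by (simp add: R_def)
  have "compact (S \<inter> cball 0 R)" using assms(1) by (intro closed_Int_compact) auto
  moreover have "S \<inter> cball 0 R \<noteq> {}" using u0 Rge by auto
  moreover have "continuous_on (S \<inter> cball 0 R) ?F" using Pq_cont continuous_on_subset by blast
  ultimately have "\<exists>x\<in>S \<inter> cball 0 R. \<forall>y\<in>S \<inter> cball 0 R. ?F x \<le> ?F y"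
    by (rule continuous_attains_inf)
  then obtain x where x: "x \<in> S \<inter> cball 0 R" "\<forall>y\<in>S \<inter> cball 0 R. ?F x \<le> ?F y"
    by blast
  have "ismin ?F S x" unfolding ismin_def
  proof (intro conjI ballI)
    show "x \<in> S" using x by auto
    fix u assume u: "u \<in> S"
    show "?F x \<le> ?F u"
    proof (cases "norm u \<le> R")
      case True then show ?thesis using x u by auto
    next
      case False
      have sq: "sqrt (?F u0 / a) \<le> R" unfolding R_def by simp
      have "?F u0 / a = sqrt (?F u0 / a) ^2" using F0 assms(3) by simp
      also have "\<dots> \<le> R^2" using sq F0 assms(3) by (intro power_mono) auto
      finally have "?F u0 / a \<le> R^2" .
      then have "?F u0 \<le> a * R^2" using assms(3) by (simp add: field_simps)
      also have "a * R^2 \<le> a * (norm u)^2" using False assms(3) Rge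
        by (intro mult_left_mono power_mono) (auto intro: order_trans[OF norm_ge_zero])
      also have "\<dots> = a * (u \<bullet> u)" by (simp add: power2_norm_eq_inner)
      also have "\<dots> \<le> ?F u" by (rule Pq_ge) (use assms in auto)
      finally have "?F u0 \<le> ?F u" .
      moreover have "?F x \<le> ?F u0" using x u0 Rge by auto
      ultimately show ?thesis by linarith
    qed
  qed
  then show ?thesis by blast
qed

lemma main_bound:
  fixes r :: "'i \<Rightarrow> 'v::euclidean_space" and c :: "'i \<Rightarrow> real"
  assumes "finite I"
  shows "\<forall>L. affine L \<and> closed L \<and> L \<noteq> {} \<longrightarrow>
     (\<exists>K. \<forall>a w y. a > 0 \<and> (\<forall>i\<in>I. w i > 0) \<and> ismin (Pq a w r c I) L y \<longrightarrow> norm y \<le> K)"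
  using assms
proof (induction I rule: finite_induct)
  case empty
  show ?case
  proof (intro allI impI)
    fix L :: "'v set" assume L: "affine L \<and> closed L \<and> L \<noteq> {}"
    then obtain u0 where u0: "u0 \<in> L" by blast
    show "\<exists>K. \<forall>a w y. a > 0 \<and> (\<forall>i\<in>{}. w i > 0) \<and> ismin (Pq a w r c {}) L y \<longrightarrow> norm y \<le> K"
    proof (intro exI[of _ "norm u0"] allI impI)
      fix a w y assume h: "a > 0 \<and> (\<forall>i\<in>{}. w i > (0::real)) \<and> ismin (Pq a w r c {}) L y"
      then have "a*(y\<bullet>y) \<le> a*(u0\<bullet>u0)" using u0 unfolding ismin_def Pq_def by auto
      then have "y\<bullet>y \<le> u0\<bullet>u0" using h by simp
      then show "norm y \<le> norm u0" by (simp add: norm_eq_sqrt_inner)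
    qed
  qed
next
  case (insert j I)
  show ?case
  proof (intro allI impI)
    fix L :: "'v set" assume L: "affine L \<and> closed L \<and> L \<noteq> {}"
    obtain K0 where K0: "\<forall>a w y. a > 0 \<and> (\<forall>i\<in>I. w i > 0) \<and> ismin (Pq a w r c I) L y \<longrightarrow> norm y \<le> K0"
      using insert.IH[THEN spec, of L, THEN mp, OF L] by (elim exE)
    define L' where "L' = L \<inter> {y. r j \<bullet> y = c j}"
    have L'a: "affine L'" "closed L'" using L
      by (auto simp: L'_def intro!: affine_Int affine_hyperplane closed_Int closed_hyperplane)
    have "\<exists>K1. L' \<noteq> {} \<longrightarrow> (\<forall>a w y. a > 0 \<and> (\<forall>i\<in>I. w i > 0) \<and> ismin (Pq a w r c I) L' y \<longrightarrow> norm y \<le> K1)"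
    proof (cases "L' = {}")
      case False
      then have "affine L' \<and> closed L' \<and> L' \<noteq> {}" using L'a by blast
      from insert.IH[THEN spec, of L', THEN mp, OF this] show ?thesis by blast
    qed auto
    then obtain K1 where K1: "L' \<noteq> {} \<longrightarrow> (\<forall>a w y. a > 0 \<and> (\<forall>i\<in>I. w i > 0) \<and> ismin (Pq a w r c I) L' y \<longrightarrow> norm y \<le> K1)"
      by blast
    show "\<exists>K. \<forall>a w y. a > 0 \<and> (\<forall>i\<in>insert j I. w i > 0) \<and> ismin (Pq a w r c (insert j I)) L y \<longrightarrow> norm y \<le> K"
    proof (intro exI[of _ "max K0 K1"] allI impI)
      fix a w y assume h: "a > 0 \<and> (\<forall>i\<in>insert j I. w i > (0::real)) \<and> ismin (Pq a w r c (insert j I)) L y"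
      define F where "F = Pq a w r c (insert j I)"
      define Fr where "Fr = Pq a w r c I"
      define G where "G = Gq a w r c I"
      define H where "H = Hq a w r I"
      define lj where "lj = (\<lambda>z. r j \<bullet> z - c j)"
      have a: "a > 0" and wpos: "\<forall>i\<in>I. w i > 0" and wj: "w j > 0" and ym: "ismin F L y"
        using h by (auto simp: F_def)
      have w0: "\<forall>i\<in>I. w i \<ge> 0" using wpos by auto
      have wins: "\<forall>i\<in>insert j I. w i \<ge> 0" using h by auto
      have Fdec: "\<And>z. F z = w j * (lj z)^2 + Fr z"
        unfolding F_def Fr_def Pq_def lj_def using insert.hyps by (simp add: algebra_simps)
      obtain y0 where y0: "ismin Fr L y0" using opt_exists[of L a I w r c] L a w0 unfolding Fr_def by auto
      have y0L: "y0 \<in> L" using y0 by (auto simp: ismin_def)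
      have ny0: "norm y0 \<le> K0" using K0[rule_format, of a w y0] a wpos y0 unfolding Fr_def by blast
      have yL: "y \<in> L" using ym by (auto simp: ismin_def)
      have uniq: "\<And>z. ismin F L z \<Longrightarrow> y = z"
      proof -
        fix z assume "ismin F L z"
        then show "y = z" using opt_unique[of L a "insert j I" w r c y z] L a wins ym unfolding F_def by simp
      qed
      show "norm y \<le> max K0 K1"
      proof (cases "(\<forall>u\<in>L. r j \<bullet> u = r j \<bullet> y0) \<or> lj y0 = 0")
        case True
        have "ismin F L y0" unfolding ismin_def
        proof (intro conjI ballI)
          fix u assume u: "u \<in> L"
          have "Fr y0 \<le> Fr u" using y0 u by (auto simp: ismin_def)
          moreover have "(lj y0)^2 \<le> (lj u)^2" using True u unfolding lj_def by auto
          ultimately show "F y0 \<le> F u" unfolding Fdec using wj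
            by (meson add_mono less_imp_le mult_left_mono)
        qed (fact y0L)
        then have "y = y0" by (rule uniq)
        then show ?thesis using ny0 by simp
      next
        case False
        then obtain u1 where u1: "u1 \<in> L" "r j \<bullet> u1 \<noteq> r j \<bullet> y0" and l0: "lj y0 \<noteq> 0" by auto
        define p where "p = y0 + ((c j - r j \<bullet> y0) / (r j \<bullet> (u1 - y0))) *\<^sub>R (u1 - y0)"
        have "p \<in> L" unfolding p_def using mem_affine_3_minus[of L y0 u1 y0] L u1 y0L by blast
        moreover have "r j \<bullet> p = c j" unfolding p_def using u1
          by (simp add: inner_add_right inner_diff_right)
        ultimately have L'ne: "L' \<noteq> {}" unfolding L'_def by blast
        obtain yi where yi: "ismin Fr L' yi"
          using opt_exists[of L' a I w r c] L'a L'ne a w0 unfolding Fr_def by auto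
        have yiL': "yi \<in> L'" using yi by (auto simp: ismin_def)
        then have yiL: "yi \<in> L" and lyi: "lj yi = 0" unfolding L'_def lj_def by auto
        have nyi: "norm yi \<le> K1" using K1[rule_format, OF L'ne, of a w yi] a wpos yi unfolding Fr_def by blast
        have G0: "\<forall>u\<in>L. G y0 (u - y0) = 0"
          using opt_char[of L y0 a I w r c] L y0L a w0 y0 unfolding Fr_def G_def by auto
        have Gi: "\<forall>u\<in>L'. G yi (u - yi) = 0"
          using opt_char[of L' yi a I w r c] L'a yiL' a w0 yi unfolding Fr_def G_def by auto
        have Fr_exp: "\<And>z t d. Fr (z + t *\<^sub>R d) = Fr z + 2 * t * G z d + t^2 * H d"
          unfolding Fr_def G_def H_def by (rule Pq_expand)
        have Hnn: "\<And>d. H d \<ge> 0" unfolding H_def by (rule Hq_nonneg) (use a w0 in auto)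
        define s where "s = lj y"
        define \<theta> where "\<theta> = 1 - s / lj y0"
        define z where "z = (1-\<theta>) *\<^sub>R y0 + \<theta> *\<^sub>R yi"
        have zL: "z \<in> L" unfolding z_def using mem_affine[of L y0 yi "1-\<theta>" \<theta>] L y0L yiL by auto
        have "lj z = (1-\<theta>) * lj y0 + \<theta> * lj yi" unfolding z_def lj_def
          by (simp add: inner_add_right algebra_simps)
        then have lz: "lj z = s" using lyi l0 unfolding \<theta>_def by simp
        have zmin: "\<forall>u\<in>L. lj u = s \<longrightarrow> Fr z \<le> Fr u"
        proof (intro ballI impI)
          fix u assume u: "u \<in> L" "lj u = s"
          define d where "d = u - z"
          have "y0 + d \<in> L" unfolding d_def using mem_affine_3_minus[of L y0 u z 1] L y0L u zL by simp
          then have g0: "G y0 d = 0" using G0 by force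
          have "yi + d \<in> L" unfolding d_def using mem_affine_3_minus[of L yi u z 1] L yiL u zL by simp
          moreover have "lj (yi + d) = 0" using lyi u(2) lz unfolding lj_def d_def
            by (simp add: inner_add_right inner_diff_right)
          ultimately have "yi + d \<in> L'" unfolding L'_def lj_def by auto
          then have gi: "G yi d = 0" using Gi by force
          have "G z d = (1-\<theta>) * G y0 d + \<theta> * G yi d" unfolding z_def G_def by (rule Gq_comb)
          then have "G z d = 0" using g0 gi by simp
          then have "Fr u = Fr z + H d" using Fr_exp[of z 1 d] unfolding d_def by simp
          then show "Fr z \<le> Fr u" using Hnn[of d] by simp
        qed
        have "F z \<le> F y" using zmin yL Fdec lz s_def by auto
        then have "ismin F L z" using ym zL unfolding ismin_def by force
        then have yz: "y = z" by (rule uniq)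
        define D where "D = yi - y0"
        have gD: "G y0 D = 0" using G0 yiL unfolding D_def by blast
        have FrD: "\<And>t. Fr (y0 + t *\<^sub>R D) = Fr y0 + t^2 * H D" using Fr_exp gD by simp
        have lD: "\<And>t. lj (y0 + t *\<^sub>R D) = (1-t) * lj y0"
          using lyi unfolding lj_def D_def by (simp add: inner_add_right inner_diff_right algebra_simps)
        have Fz: "\<And>t. F (y0 + t *\<^sub>R D) = w j * ((1-t) * lj y0)^2 + Fr y0 + t^2 * H D"
          using Fdec FrD lD by simp
        have yform: "y = y0 + \<theta> *\<^sub>R D" using yz unfolding z_def D_def by (simp add: algebra_simps)
        have Fy: "F y = w j * ((1-\<theta>) * lj y0)^2 + Fr y0 + \<theta>^2 * H D" using Fz yform by simp
        have Fy0: "F y0 = w j * (lj y0)^2 + Fr y0" using Fz[of 0] by simp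
        have Fyi: "F yi = Fr y0 + H D" using Fz[of 1] unfolding D_def by simp
        have le0: "F y \<le> F y0" using ym y0L by (auto simp: ismin_def)
        have le1: "F y \<le> F yi" using ym yiL by (auto simp: ismin_def)
        have lpos: "(lj y0)^2 > 0" using l0 by simp
        have th0: "\<theta> \<ge> 0"
        proof (rule ccontr)
          assume "\<not> \<theta> \<ge> 0"
          then have "1 < 1 - \<theta>" by simp
          then have "1 < (1-\<theta>)^2" by (rule one_less_power) simp
          then have "(lj y0)^2 < (1-\<theta>)^2 * (lj y0)^2" using lpos by simp
          then have "w j * (lj y0)^2 < w j * ((1-\<theta>) * lj y0)^2" using wj by (simp add: power_mult_distrib)
          moreover have "\<theta>^2 * H D \<ge> 0" using Hnn by simp
          ultimately show False using Fy Fy0 le0 by linarith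
        qed
        have th1: "\<theta> \<le> 1"
        proof (rule ccontr)
          assume "\<not> \<theta> \<le> 1"
          then have "1 \<le> \<theta>" by simp
          then have "1 \<le> \<theta>^2" by (rule one_le_power)
          then have "1 * H D \<le> \<theta>^2 * H D" using Hnn[of D] by (rule mult_right_mono)
          then have "H D \<le> \<theta>^2 * H D" by simp
          moreover have "(1-\<theta>) * lj y0 \<noteq> 0" using l0 \<open>\<not> \<theta> \<le> 1\<close> by simp
          then have "0 < ((1-\<theta>) * lj y0)^2" by simp
          then have "0 < w j * ((1-\<theta>) * lj y0)^2" using wj by (rule mult_pos_pos[rotated])
          ultimately show False using Fy Fyi le1 by linarith
        qed
        have "norm y \<le> norm ((1-\<theta>) *\<^sub>R y0) + norm (\<theta> *\<^sub>R yi)" unfolding yz z_def by (rule norm_triangle_ineq)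
        also have "\<dots> = (1-\<theta>) * norm y0 + \<theta> * norm yi" using th0 th1 by simp
        also have "\<dots> \<le> (1-\<theta>) * max K0 K1 + \<theta> * max K0 K1" using th0 th1 ny0 nyi
          by (intro add_mono mult_left_mono) auto
        also have "\<dots> = max K0 K1" by (simp add: algebra_simps)
        finally show ?thesis .
      qed
    qed
  qed
qed


lemma outer_mv: "outer u *v y = (u \<bullet> y) *\<^sub>R (u :: real^'p)"
  by (simp add: vec_eq_iff matrix_vector_mult_def outer_def inner_vec_def sum_distrib_left sum_distrib_right algebra_simps)

lemma sum_mv: "(\<Sum>i\<in>S. A i) *v (y :: real^'p) = (\<Sum>i\<in>S. A i *v y)"
proof (cases "finite S")
  case True then show ?thesis
    by (induction S rule: finite_induct) (simp_all add: matrix_vector_mult_add_rdistrib)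
qed simp

lemma Cmat_mv: "Cmat n x a *v y = (x 1 \<bullet> y) *\<^sub>R x 1 + (\<Sum>i\<in>{2..n}. (a i * (x i \<bullet> y)) *\<^sub>R x i) + a 1 *\<^sub>R y"
  unfolding Cmat_def
  by (simp add: matrix_vector_mult_add_rdistrib sum_mv scaleR_matrix_vector_assoc[symmetric] outer_mv)

lemma Cmat_inner: "(Cmat n x a *v y) \<bullet> d = (x 1 \<bullet> y) * (x 1 \<bullet> d) + (\<Sum>i\<in>{2..n}. a i * (x i \<bullet> y) * (x i \<bullet> d)) + a 1 * (y \<bullet> d)"
  unfolding Cmat_mv by (simp add: inner_add_left inner_sum_left)

lemma Cmat_sym: "(Cmat n x a *v y) \<bullet> d = (Cmat n x a *v d) \<bullet> y"
  unfolding Cmat_inner by (simp add: inner_commute mult.commute mult.left_commute)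

theorem lemma3:
  fixes n :: nat and x :: "nat \<Rightarrow> real^'p"
  assumes "n \<ge> 1"
  shows "C n x < \<infinity>"
proof -
  define c :: "nat \<Rightarrow> real" where "c = (\<lambda>i. if i = 1 then 1 else 0)"
  have "affine (UNIV :: (real^'p) set) \<and> closed (UNIV :: (real^'p) set) \<and> (UNIV :: (real^'p) set) \<noteq> {}" by simp
  from main_bound[of "{1..n}" x c, OF finite_atLeastAtMost, THEN spec, THEN mp, OF this]
  obtain K where K: "\<forall>a w y. a > 0 \<and> (\<forall>i\<in>{1..n}. w i > 0) \<and> ismin (Pq a w x c {1..n}) UNIV y \<longrightarrow> norm y \<le> K"
    by (auto)
  have bound: "x 1 \<bullet> ((matrix_inv (Cmat n x a) ** matrix_inv (Cmat n x a)) *v x 1) \<le> K^2"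
    if apos: "\<forall>i\<in>{1..n}. a i > 0" for a
  proof -
    define M where "M = Cmat n x a"
    have one: "1 \<in> {1..n}" using assms by simp
    have a1: "a 1 > 0" using apos one by blast
    have quad: "(M *v v) \<bullet> v \<ge> a 1 * (v \<bullet> v)" for v
    proof -
      have "(M *v v) \<bullet> v = (x 1 \<bullet> v) * (x 1 \<bullet> v) + (\<Sum>i\<in>{2..n}. a i * (x i \<bullet> v) * (x i \<bullet> v)) + a 1 * (v \<bullet> v)"
        unfolding M_def by (rule Cmat_inner)
      moreover have "(\<Sum>i\<in>{2..n}. a i * (x i \<bullet> v) * (x i \<bullet> v)) \<ge> 0"
      proof (intro sum_nonneg)
        fix i assume "i \<in> {2..n}"
        then have "a i \<ge> 0" using apos by (auto intro: less_imp_le)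
        moreover have "(x i \<bullet> v) * (x i \<bullet> v) \<ge> 0" by simp
        ultimately show "a i * (x i \<bullet> v) * (x i \<bullet> v) \<ge> 0" by (simp add: mult.assoc)
      qed
      ultimately show ?thesis by simp
    qed
    have "\<forall>v. M *v v = 0 \<longrightarrow> v = 0"
    proof (intro allI impI)
      fix v assume "M *v v = 0"
      then have "a 1 * (v \<bullet> v) \<le> 0" using quad[of v] by simp
      then have "v \<bullet> v \<le> 0" using a1 by (simp add: mult_le_0_iff)
      then show "v = 0" by (meson inner_eq_zero_iff inner_ge_zero order_antisym)
    qed
    then have "invertible M" unfolding invertible_left_inverse matrix_left_invertible_ker[symmetric] .
    then have inv: "M ** matrix_inv M = mat 1 \<and> matrix_inv M ** M = mat 1"
      unfolding invertible_def matrix_inv_def by (rule someI_ex)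
    define y where "y = matrix_inv M *v x 1"
    have My: "M *v y = x 1" unfolding y_def using inv by (simp add: matrix_vector_mul_assoc)
    have "x 1 \<bullet> ((matrix_inv M ** matrix_inv M) *v x 1) = (M *v y) \<bullet> (matrix_inv M *v y)"
      using My by (simp add: y_def matrix_vector_mul_assoc[symmetric])
    also have "\<dots> = (M *v (matrix_inv M *v y)) \<bullet> y" unfolding M_def by (rule Cmat_sym)
    also have "\<dots> = y \<bullet> y" using inv by (simp add: matrix_vector_mul_assoc)
    finally have val: "x 1 \<bullet> ((matrix_inv M ** matrix_inv M) *v x 1) = y \<bullet> y" .
    define w where "w = (\<lambda>i::nat. if i = 1 then 1 else a i)"
    have wpos: "\<forall>i\<in>{1..n}. w i > 0" using apos by (simp add: w_def)
    have G: "Gq (a 1) w x c {1..n} y d = 0" for d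
    proof -
      have ins: "{1..n} = insert 1 {2..n}" using assms by auto
      have s: "(\<Sum>i\<in>{2..n}. w i * (x i \<bullet> y - c i) * (x i \<bullet> d)) = (\<Sum>i\<in>{2..n}. a i * (x i \<bullet> y) * (x i \<bullet> d))"
        by (rule sum.cong) (auto simp: w_def c_def)
      have "Gq (a 1) w x c {1..n} y d = a 1 * (y \<bullet> d) + (x 1 \<bullet> y - 1) * (x 1 \<bullet> d) + (\<Sum>i\<in>{2..n}. a i * (x i \<bullet> y) * (x i \<bullet> d))"
        unfolding Gq_def ins using s by (simp add: w_def c_def)
      also have "\<dots> = (M *v y) \<bullet> d - x 1 \<bullet> d" unfolding M_def Cmat_inner by (simp add: algebra_simps)
      also have "\<dots> = 0" using My by simp
      finally show ?thesis .
    qed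
    have "ismin (Pq (a 1) w x c {1..n}) UNIV y"
      using opt_char[of UNIV y "a 1" "{1..n}" w x c] G a1 wpos by (simp add: less_imp_le)
    then have "norm y \<le> K" using K a1 wpos by blast
    then have "norm y ^ 2 \<le> K^2" by (intro power_mono) auto
    then show ?thesis using val unfolding M_def by (simp add: power2_norm_eq_inner)
  qed
  have le: "C n x \<le> ereal (K^2)"
    unfolding C_def
  proof (rule SUP_least)
    fix a :: "nat \<Rightarrow> real" assume "a \<in> {a. \<forall>i\<in>{1..n}. a i > 0}"
    then have "\<forall>i\<in>{1..n}. a i > 0" by simp
    then show "ereal (x 1 \<bullet> ((matrix_inv (Cmat n x a) ** matrix_inv (Cmat n x a)) *v x 1)) \<le> ereal (K^2)"
      using bound by simp
  qed
  have "ereal (K^2) < \<infinity>" by simp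
  then show ?thesis by (rule order_le_less_trans[OF le])
qed

end
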